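(* Let $(\Omega,d)$ be a compact metric space, let $n\ge1$, and fix $Y_1,\dots,Y_n\in\Omega$. Let $\Delta^{n-1}=\{w\in\mathbb{R}^n: w_i\ge0,\ \sum_i w_i=1\}$ and assume that for every $w\in\Delta^{n-1}$ the weighted Fréchet mean $\mu(w)=\operatorname{argmin}_{y\in\Omega}\sum_{i=1}^n w_i d^2(y,Y_i)$ exists and is unique. Let $w:\mathbb{R}^p\to\Delta^{n-1}$ be continuous and set $m=\mu\circ w$. Then for every $\epsilon>0$ there exists a neural network $w_{\theta^*}:\mathbb{R}^p\to\Delta^{n-1}$ such that $m_{\theta^*}=\mu\circ w_{\theta^*}$ satisfies \[\sup_{\|x\|\le 1} d\big(m_{\theta^*}(x),m(x)\big)<\epsilon.\] Moreover, if $X$ is a stochastically bounded random vector in $\mathbb{R}^p$, then for every $\epsilon>0$ and every $\delta>0$ there exists a neural network $w_{\theta^*}$ such that \[P\big(d(m_{\theta^*}(X),m(X))<\epsilon\big)>1-\delta.\]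
   Context: Here a "neural network" $w_\theta:\mathbb{R}^p\to\Delta^{n-1}$ with parameters $\theta$ means a fully connected feedforward network with hidden layers using ReLU activations followed by a softmax output layer producing an $n$-dimensional probability vector; the number of layers and neurons is arbitrary. $\|x\|$ denotes the Euclidean norm on $\mathbb{R}^p$. $X$ stochastically bounded means that for every $\delta>0$ there is $M_\delta$ with $P(\|X\|\le M_\delta)>1-\delta$. *)

theory Defs
  imports "HOL-Probability.Probability"
begin

definition prob_simplex :: "nat \<Rightarrow> (nat \<Rightarrow> real) set" where
  "prob_simplex n = {w. (\<forall>i<n. 0 \<le> w i) \<and> (\<Sum>i<n. w i) = 1 \<and> (\<forall>i\<ge>n. w i = 0)}"

definition frechet_obj :: "nat \<Rightarrow> (nat \<Rightarrow> 'a::metric_space) \<Rightarrow> (nat \<Rightarrow> real) \<Rightarrow> 'a \<Rightarrow> real" where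
  "frechet_obj n Y w y = (\<Sum>i<n. w i * (dist y (Y i))\<^sup>2)"

definition is_frechet_mean :: "'a::metric_space set \<Rightarrow> nat \<Rightarrow> (nat \<Rightarrow> 'a) \<Rightarrow> (nat \<Rightarrow> real) \<Rightarrow> 'a \<Rightarrow> bool" where
  "is_frechet_mean \<Omega> n Y w y \<longleftrightarrow> y \<in> \<Omega> \<and> (\<forall>z\<in>\<Omega>. frechet_obj n Y w y \<le> frechet_obj n Y w z)"

definition frechet_mean :: "'a::metric_space set \<Rightarrow> nat \<Rightarrow> (nat \<Rightarrow> 'a) \<Rightarrow> (nat \<Rightarrow> real) \<Rightarrow> 'a" where
  "frechet_mean \<Omega> n Y w = (THE y. is_frechet_mean \<Omega> n Y w y)"

definition relu :: "real \<Rightarrow> real" where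
  "relu t = max 0 t"

definition affine_layer :: "nat \<Rightarrow> (nat \<Rightarrow> nat \<Rightarrow> real) \<Rightarrow> (nat \<Rightarrow> real) \<Rightarrow> (nat \<Rightarrow> real) \<Rightarrow> (nat \<Rightarrow> real)" where
  "affine_layer d W b v = (\<lambda>j. (\<Sum>i<d. W j i * v i) + b j)"

definition softmax :: "nat \<Rightarrow> (nat \<Rightarrow> real) \<Rightarrow> (nat \<Rightarrow> real)" where
  "softmax n z = (\<lambda>i. if i < n then exp (z i) / (\<Sum>j<n. exp (z j)) else 0)"

text \<open>A network: first affine layer on R^p (rows A j, biases a j), then a list of
  layers (input width d, weights W, biases b); ReLU is applied before every layer
  in the list (i.e. to every hidden pre-activation); the last pre-activation goes
  through softmax.\<close>
type_synonym 'p network =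
  "(nat \<Rightarrow> real ^ 'p) \<times> (nat \<Rightarrow> real) \<times> (nat \<times> (nat \<Rightarrow> nat \<Rightarrow> real) \<times> (nat \<Rightarrow> real)) list"

fun apply_layers :: "(nat \<times> (nat \<Rightarrow> nat \<Rightarrow> real) \<times> (nat \<Rightarrow> real)) list \<Rightarrow> (nat \<Rightarrow> real) \<Rightarrow> (nat \<Rightarrow> real)" where
  "apply_layers [] v = v"
| "apply_layers ((d, W, b) # ls) v = apply_layers ls (affine_layer d W b (relu \<circ> v))"

definition nn_eval :: "nat \<Rightarrow> 'p::finite network \<Rightarrow> real ^ 'p \<Rightarrow> (nat \<Rightarrow> real)" where
  "nn_eval n \<theta> x = (case \<theta> of (A, a, ls) \<Rightarrow>
      softmax n (apply_layers ls (\<lambda>j. inner (A j) x + a j)))"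

definition stoch_bounded :: "'b measure \<Rightarrow> ('b \<Rightarrow> 'c::real_normed_vector) \<Rightarrow> bool" where
  "stoch_bounded M X \<longleftrightarrow> (\<forall>\<delta>>0. \<exists>C. measure M {\<omega>\<in>space M. norm (X \<omega>) \<le> C} > 1 - \<delta>)"

end

theory Submission
  imports Defs
begin

definition NN :: "nat \<Rightarrow> nat \<Rightarrow> (real^'p::finite \<Rightarrow> nat \<Rightarrow> real) \<Rightarrow> bool" where
  "NN k m G \<longleftrightarrow> (\<exists>A a ls. length ls = k \<and>
      (\<forall>x j. j < m \<longrightarrow> apply_layers ls (\<lambda>j. inner (A j) x + a j) j = G x j))"

lemma apply_layers_append:
  "apply_layers (ls @ [(d,W,b)]) v = affine_layer d W b (relu \<circ> apply_layers ls v)"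
  by (induction ls v rule: apply_layers.induct) (auto simp: comp_def)

lemma affine_layer_cong:
  "(\<forall>i<d. v i = v' i) \<Longrightarrow> affine_layer d W b v = affine_layer d W b v'"
  unfolding affine_layer_def by (auto intro!: sum.cong)

lemma affine_comp:
  "affine_layer d C e (affine_layer d1 W1 b1 u) =
   affine_layer d1 (\<lambda>j l. \<Sum>i<d. C j i * W1 i l) (\<lambda>j. (\<Sum>i<d. C j i * b1 i) + e j) u"
  unfolding affine_layer_def
  by (auto simp: fun_eq_iff distrib_left sum.distrib sum_distrib_left sum_distrib_right
        mult.assoc intro: sum.swap)

lemma affine_comp0:
  "affine_layer d C e (\<lambda>j. inner (A j) x + a j) =
   (\<lambda>j. inner (\<Sum>i<d. C j i *\<^sub>R A i) x + ((\<Sum>i<d. C j i * a i) + e j))"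
  unfolding affine_layer_def
  by (auto simp: fun_eq_iff distrib_left sum.distrib inner_sum_left)

lemma NN_affine: "NN 0 m (\<lambda>x j. inner (A j) x + a j)"
  unfolding NN_def by (rule exI[of _ A], rule exI[of _ a], rule exI[of _ "[]"]) auto

lemma NN_cong: "NN k m G \<Longrightarrow> (\<And>x j. j < m \<Longrightarrow> G x j = G' x j) \<Longrightarrow> NN k m G'"
  unfolding NN_def by metis

lemma NN_mono: "NN k m G \<Longrightarrow> m' \<le> m \<Longrightarrow> NN k m' G"
  unfolding NN_def by (metis less_le_trans)

lemma NN_layer:
  assumes "NN k m G" "d \<le> m"
  shows "NN (Suc k) m' (\<lambda>x. affine_layer d W b (relu \<circ> G x))"
proof -
  obtain A a ls where ls: "length ls = k"
    and eq: "\<forall>x j. j < m \<longrightarrow> apply_layers ls (\<lambda>j. inner (A j) x + a j) j = G x j"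
    using assms(1) unfolding NN_def by blast
  show ?thesis unfolding NN_def
  proof (intro exI conjI allI impI)
    show "length (ls @ [(d,W,b)]) = Suc k" using ls by simp
    fix x j
    show "apply_layers (ls @ [(d,W,b)]) (\<lambda>j. inner (A j) x + a j) j = affine_layer d W b (relu \<circ> G x) j"
      unfolding apply_layers_append
      by (rule arg_cong[where f="\<lambda>f. f j"], rule affine_layer_cong) (use eq assms(2) in auto)
  qed
qed

lemma NN_post:
  assumes "NN k m G" "d \<le> m"
  shows "NN k m' (\<lambda>x. affine_layer d C e (G x))"
proof -
  obtain A a ls where ls: "length ls = k"
    and eq: "\<forall>x j. j < m \<longrightarrow> apply_layers ls (\<lambda>j. inner (A j) x + a j) j = G x j"
    using assms(1) unfolding NN_def by blast
  have eq2: "affine_layer d C e (G x) = affine_layer d C e (apply_layers ls (\<lambda>j. inner (A j) x + a j))" for x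
    by (rule affine_layer_cong) (use eq assms(2) in auto)
  show ?thesis
  proof (cases ls rule: rev_cases)
    case Nil
    show ?thesis unfolding NN_def
      apply (rule exI[of _ "\<lambda>j. \<Sum>i<d. C j i *\<^sub>R A i"])
      apply (rule exI[of _ "\<lambda>j. (\<Sum>i<d. C j i * a i) + e j"])
      apply (rule exI[of _ "[]"])
      using ls Nil by (simp add: eq2 affine_comp0)
  next
    case (snoc ls0 l)
    obtain d1 W1 b1 where l: "l = (d1, W1, b1)" by (cases l) auto
    show ?thesis unfolding NN_def
      apply (rule exI[of _ A], rule exI[of _ a])
      apply (rule exI[of _ "ls0 @ [(d1, (\<lambda>j l. \<Sum>i<d. C j i * W1 i l), (\<lambda>j. (\<Sum>i<d. C j i * b1 i) + e j))]"])
      using ls snoc l by (simp add: eq2 apply_layers_append affine_comp)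
  qed
qed

definition il :: "(nat \<Rightarrow> 'b) \<Rightarrow> (nat \<Rightarrow> 'b) \<Rightarrow> nat \<Rightarrow> 'b" where
  "il v1 v2 = (\<lambda>j. if even j then v1 (j div 2) else v2 (j div 2))"

fun merge :: "(nat \<times> (nat \<Rightarrow> nat \<Rightarrow> real) \<times> (nat \<Rightarrow> real)) list \<Rightarrow> (nat \<times> (nat \<Rightarrow> nat \<Rightarrow> real) \<times> (nat \<Rightarrow> real)) list
   \<Rightarrow> (nat \<times> (nat \<Rightarrow> nat \<Rightarrow> real) \<times> (nat \<Rightarrow> real)) list" where
  "merge ((d1,W1,b1)#l1) ((d2,W2,b2)#l2) =
     (2 * max d1 d2,
      (\<lambda>j i. if even j then (if even i \<and> i div 2 < d1 then W1 (j div 2) (i div 2) else 0)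
             else (if odd i \<and> i div 2 < d2 then W2 (j div 2) (i div 2) else 0)),
      il b1 b2) # merge l1 l2"
| "merge _ _ = []"

lemma sum_double: "(\<Sum>i<2*D. f i) = (\<Sum>i<D. f (2*i)) + (\<Sum>i<D. f (2*i+1))" for f :: "nat \<Rightarrow> real"
  by (induction D) (auto simp: algebra_simps)

lemma sum_trunc: "d1 \<le> D \<Longrightarrow> (\<Sum>i<D. if i < d1 then f i else 0) = (\<Sum>i<d1. f i)" for f :: "nat \<Rightarrow> real"
proof -
  assume "d1 \<le> D"
  then have "{..<D} \<inter> {i. i < d1} = {..<d1}" by auto
  then show ?thesis by (simp add: sum.If_cases)
qed

lemma affine_merge:
  "affine_layer (2 * max d1 d2)
      (\<lambda>j i. if even j then (if even i \<and> i div 2 < d1 then W1 (j div 2) (i div 2) else 0)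
             else (if odd i \<and> i div 2 < d2 then W2 (j div 2) (i div 2) else 0))
      (il b1 b2) (il u1 u2) = il (affine_layer d1 W1 b1 u1) (affine_layer d2 W2 b2 u2)"
proof (rule ext)
  fix j
  show "affine_layer (2 * max d1 d2)
      (\<lambda>j i. if even j then (if even i \<and> i div 2 < d1 then W1 (j div 2) (i div 2) else 0)
             else (if odd i \<and> i div 2 < d2 then W2 (j div 2) (i div 2) else 0))
      (il b1 b2) (il u1 u2) j = il (affine_layer d1 W1 b1 u1) (affine_layer d2 W2 b2 u2) j"
    unfolding affine_layer_def il_def sum_double
    by (cases "even j") (auto simp: if_distrib[of "\<lambda>t. t * _"] sum_trunc cong: if_cong)
qed

lemma merge_apply:
  "length l1 = length l2 \<Longrightarrow>
   apply_layers (merge l1 l2) (il v1 v2) = il (apply_layers l1 v1) (apply_layers l2 v2)"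
proof (induction l1 l2 arbitrary: v1 v2 rule: merge.induct)
  case (1 d1 W1 b1 l1 d2 W2 b2 l2)
  have r: "relu \<circ> il v1 v2 = il (relu \<circ> v1) (relu \<circ> v2)"
    by (auto simp: il_def fun_eq_iff)
  show ?case using 1 by (simp add: r affine_merge)
qed (auto simp: il_def)

lemma NN_par:
  assumes "NN k m G" "NN k m H"
  shows "NN k (2*m) (\<lambda>x. il (G x) (H x))"
proof -
  obtain A1 a1 l1 where l1: "length l1 = k"
    and eq1: "\<forall>x j. j < m \<longrightarrow> apply_layers l1 (\<lambda>j. inner (A1 j) x + a1 j) j = G x j"
    using assms(1) unfolding NN_def by blast
  obtain A2 a2 l2 where l2: "length l2 = k"
    and eq2: "\<forall>x j. j < m \<longrightarrow> apply_layers l2 (\<lambda>j. inner (A2 j) x + a2 j) j = H x j"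
    using assms(2) unfolding NN_def by blast
  have a: "(\<lambda>j. inner (il A1 A2 j) x + il a1 a2 j) = il (\<lambda>j. inner (A1 j) x + a1 j) (\<lambda>j. inner (A2 j) x + a2 j)" for x
    by (auto simp: il_def fun_eq_iff)
  show ?thesis unfolding NN_def
  proof (intro exI conjI allI impI)
    show "length (merge l1 l2) = k" using l1 l2
      by (induction l1 l2 arbitrary: k rule: merge.induct) auto
    fix x j assume j: "j < 2*m"
    have "apply_layers (merge l1 l2) (\<lambda>j. inner (il A1 A2 j) x + il a1 a2 j) =
       il (apply_layers l1 (\<lambda>j. inner (A1 j) x + a1 j)) (apply_layers l2 (\<lambda>j. inner (A2 j) x + a2 j))"
      unfolding a by (rule merge_apply) (simp add: l1 l2)
    then show "apply_layers (merge l1 l2) (\<lambda>j. inner (il A1 A2 j) x + il a1 a2 j) j = il (G x) (H x) j"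
      using j eq1 eq2 by (auto simp: il_def)
  qed
qed

lemma NN_neg: "NN k m G \<Longrightarrow> NN k m (\<lambda>x j. - G x j)"
  apply (drule NN_post[where d=m and m'=m and C="\<lambda>j i. if j = i then -1 else 0" and e="\<lambda>_. 0"], simp)
  apply (erule NN_cong)
  by (simp add: affine_layer_def if_distrib[of "\<lambda>t. t * _"] cong: if_cong)

lemma NN_lift: assumes "NN k m G" shows "NN (Suc k) m G"
proof -
  have "NN k (2*m) (\<lambda>x. il (G x) (\<lambda>j. - G x j))"
    by (rule NN_par[OF assms NN_neg[OF assms]])
  then have "NN (Suc k) m (\<lambda>x. affine_layer (2*m) (\<lambda>j i. if i = 2*j then 1 else if i = 2*j+1 then -1 else 0)
      (\<lambda>_. 0) (relu \<circ> il (G x) (\<lambda>j. - G x j)))"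
    by (rule NN_layer) simp
  then show ?thesis
  proof (rule NN_cong)
    fix x j assume j: "j < m"
    have e1: "(\<lambda>i. (if 2*i = 2*j then 1 else if 2*i = 2*j+1 then -1 else 0) * relu (G x i)) =
       (\<lambda>i. if j = i then relu (G x i) else 0)" by (auto simp: fun_eq_iff)
    have e2: "(\<lambda>i. (if 2*i+1 = 2*j then 1 else if 2*i+1 = 2*j+1 then -1 else 0) * relu (- G x i)) =
       (\<lambda>i. if j = i then - relu (- G x i) else 0)" by (auto simp: fun_eq_iff)
    show "affine_layer (2*m) (\<lambda>j i. if i = 2*j then 1 else if i = 2*j+1 then -1 else 0)
      (\<lambda>_. 0) (relu \<circ> il (G x) (\<lambda>j. - G x j)) j = G x j" (is "?L = _")
    proof -
      have p1: "(2*i = 2*j+1) = False" "(Suc (2*i) = 2*j) = False" "(2*i+1 = 2*j+1) = (i = j)" for i j :: nat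
        by presburger+
      show ?thesis
      unfolding affine_layer_def sum_double il_def
      using j by (simp add: p1 relu_def if_distrib[of "\<lambda>t. t * _"] cong: if_cong)
    qed
  qed
qed

lemma NN_lift_le: assumes "NN k m G" "k \<le> k'" shows "NN k' m G"
  using assms(2,1) by (induction rule: dec_induct) (auto intro: NN_lift)

lemma NN_max:
  assumes "NN k 1 F" "NN k 1 G"
  shows "NN (Suc k) 1 (\<lambda>x j. max (F x 0) (G x 0))"
proof -
  have "NN k 2 (\<lambda>x. il (F x) (G x))" using NN_par[OF assms] by simp
  then have "NN k 3 (\<lambda>x. affine_layer 2 (\<lambda>j i. if j = 0 then (if i = 0 then 1 else 0)
        else if j = 1 then (if i = 0 then -1 else 0) else (if i = 0 then -1 else 1)) (\<lambda>_. 0) (il (F x) (G x)))"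
    by (rule NN_post) simp
  then have "NN (Suc k) 1 (\<lambda>x. affine_layer 3 (\<lambda>j i. if i = 1 then -1 else 1) (\<lambda>_. 0)
      (relu \<circ> affine_layer 2 (\<lambda>j i. if j = 0 then (if i = 0 then 1 else 0)
        else if j = 1 then (if i = 0 then -1 else 0) else (if i = 0 then -1 else 1)) (\<lambda>_. 0) (il (F x) (G x))))"
    by (rule NN_layer) simp
  then show ?thesis
    apply (rule NN_cong)
    by (simp add: affine_layer_def il_def numeral_3_eq_3 numeral_2_eq_2 relu_def)
qed

lemma NN_min:
  assumes "NN k 1 F" "NN k 1 G"
  shows "NN (Suc k) 1 (\<lambda>x j. min (F x 0) (G x 0))"
proof -
  have "NN k 2 (\<lambda>x. il (F x) (G x))" using NN_par[OF assms] by simp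
  then have "NN k 3 (\<lambda>x. affine_layer 2 (\<lambda>j i. if j = 0 then (if i = 0 then 1 else 0)
        else if j = 1 then (if i = 0 then -1 else 0) else (if i = 0 then 1 else -1)) (\<lambda>_. 0) (il (F x) (G x)))"
    by (rule NN_post) simp
  then have "NN (Suc k) 1 (\<lambda>x. affine_layer 3 (\<lambda>j i. if i = 0 then 1 else -1) (\<lambda>_. 0)
      (relu \<circ> affine_layer 2 (\<lambda>j i. if j = 0 then (if i = 0 then 1 else 0)
        else if j = 1 then (if i = 0 then -1 else 0) else (if i = 0 then 1 else -1)) (\<lambda>_. 0) (il (F x) (G x))))"
    by (rule NN_layer) simp
  then show ?thesis
    apply (rule NN_cong)
    by (simp add: affine_layer_def il_def numeral_3_eq_3 numeral_2_eq_2 relu_def)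
qed

definition NNs :: "(real^'p::finite \<Rightarrow> real) \<Rightarrow> bool" where
  "NNs f \<longleftrightarrow> (\<exists>k. NN k 1 (\<lambda>x j. f x))"

lemma NNs_affine: "NNs (\<lambda>x. inner A x + c)"
  unfolding NNs_def using NN_affine[of 1 "\<lambda>_. A" "\<lambda>_. c"] by blast

lemma NNs_max: assumes "NNs f" "NNs g" shows "NNs (\<lambda>x. max (f x) (g x))"
proof -
  obtain k1 k2 where "NN k1 1 (\<lambda>x j. f x)" "NN k2 1 (\<lambda>x j. g x)" using assms unfolding NNs_def by blast
  then have "NN (max k1 k2) 1 (\<lambda>x j. f x)" "NN (max k1 k2) 1 (\<lambda>x j. g x)"
    by (auto elim: NN_lift_le)
  from NN_max[OF this] show ?thesis unfolding NNs_def by auto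
qed

lemma NNs_min: assumes "NNs f" "NNs g" shows "NNs (\<lambda>x. min (f x) (g x))"
proof -
  obtain k1 k2 where "NN k1 1 (\<lambda>x j. f x)" "NN k2 1 (\<lambda>x j. g x)" using assms unfolding NNs_def by blast
  then have "NN (max k1 k2) 1 (\<lambda>x j. f x)" "NN (max k1 k2) 1 (\<lambda>x j. g x)"
    by (auto elim: NN_lift_le)
  from NN_min[OF this] show ?thesis unfolding NNs_def by auto
qed

lemma NNs_Max: "finite S \<Longrightarrow> S \<noteq> {} \<Longrightarrow> (\<forall>y\<in>S. NNs (g y)) \<Longrightarrow> NNs (\<lambda>x. Max ((\<lambda>y. g y x) ` S))"
proof (induction S rule: finite_ne_induct)
  case (singleton y) then show ?case by simp
next
  case (insert y S)
  have "NNs (\<lambda>x. max (g y x) (Max ((\<lambda>y. g y x) ` S)))"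
    using insert by (intro NNs_max) auto
  then show ?case using insert by simp
qed

lemma NNs_Min: "finite S \<Longrightarrow> S \<noteq> {} \<Longrightarrow> (\<forall>y\<in>S. NNs (g y)) \<Longrightarrow> NNs (\<lambda>x. Min ((\<lambda>y. g y x) ` S))"
proof (induction S rule: finite_ne_induct)
  case (singleton y) then show ?case by simp
next
  case (insert y S)
  have "NNs (\<lambda>x. min (g y x) (Min ((\<lambda>y. g y x) ` S)))"
    using insert by (intro NNs_min) auto
  then show ?case using insert by simp
qed

lemma NN_extend: assumes "NN k m F" shows "\<exists>F'. (\<forall>x j. j < m \<longrightarrow> F' x j = F x j) \<and> (\<forall>M. NN k M F')"
proof -
  obtain A a ls where ls: "length ls = k"
    and eq: "\<forall>x j. j < m \<longrightarrow> apply_layers ls (\<lambda>j. inner (A j) x + a j) j = F x j"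
    using assms unfolding NN_def by blast
  show ?thesis
    apply (rule exI[of _ "\<lambda>x. apply_layers ls (\<lambda>j. inner (A j) x + a j)"])
    using eq ls unfolding NN_def by auto
qed

lemma NN_vec: "(\<forall>i<n. NNs (f i)) \<Longrightarrow> \<exists>k. NN k n (\<lambda>x i. f i x)"
proof (induction n)
  case 0 then show ?case unfolding NN_def by (auto intro!: exI[of _ "[]"])
next
  case (Suc n)
  obtain k1 where k1: "NN k1 n (\<lambda>x i. f i x)" using Suc by auto
  obtain k2 where k2: "NN k2 1 (\<lambda>x j. f n x)" using Suc.prems unfolding NNs_def by auto
  obtain F1 where F1: "\<forall>x j. j < n \<longrightarrow> F1 x j = f j x" "\<forall>M. NN k1 M F1" using NN_extend[OF k1] by auto
  obtain F2 where F2: "\<forall>x j. j < 1 \<longrightarrow> F2 x j = f n x" "\<forall>M. NN k2 M F2" using NN_extend[OF k2] by auto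
  have "NN (max k1 k2) (Suc n) F1" "NN (max k1 k2) (Suc n) F2"
    using NN_lift_le[OF F1(2)[rule_format] max.cobounded1] NN_lift_le[OF F2(2)[rule_format] max.cobounded2] by auto
  from NN_par[OF this]
  have "NN (max k1 k2) (Suc n) (\<lambda>x. affine_layer (2 * Suc n)
     (\<lambda>j i. if j < n then (if i = 2*j then 1 else 0) else (if i = 1 then 1 else 0)) (\<lambda>_. 0) (il (F1 x) (F2 x)))"
    by (rule NN_post) simp
  then show ?case
  proof (intro exI, rule NN_cong)
    fix x j assume j: "j < Suc n"
    have s: "(\<Sum>i<2 * Suc n. (if j < n then (if i = 2*j then 1 else 0) else (if i = 1 then 1 else 0)) * il (F1 x) (F2 x) i)
        = (if j < n then il (F1 x) (F2 x) (2*j) else il (F1 x) (F2 x) 1)"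
      using j by (auto simp: if_distrib[of "\<lambda>t. t * _"] cong: if_cong)
    show "affine_layer (2 * Suc n)
     (\<lambda>j i. if j < n then (if i = 2*j then 1 else 0) else (if i = 1 then 1 else 0)) (\<lambda>_. 0) (il (F1 x) (F2 x)) j = f j x"
      unfolding affine_layer_def s using j F1 F2 by (auto simp: il_def less_Suc_eq)
  qed
qed

lemma cont_layers:
  "(\<forall>j. continuous_on UNIV (\<lambda>x. v x j)) \<Longrightarrow> continuous_on UNIV (\<lambda>x. apply_layers ls (v x) j)"
proof (induction ls arbitrary: v)
  case Nil then show ?case by simp
next
  case (Cons l ls)
  obtain d W b where l: "l = (d, W, b)" by (cases l) auto
  have "\<forall>j. continuous_on UNIV (\<lambda>x. affine_layer d W b (relu \<circ> v x) j)"
    unfolding affine_layer_def relu_def o_def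
    using Cons.prems by (auto intro!: continuous_intros)
  from Cons.IH[OF this] show ?case by (simp add: l)
qed

lemma NN_cont: assumes "NN k m G" "j < m" shows "continuous_on UNIV (\<lambda>x. G x j)"
proof -
  obtain A a ls where
    eq: "\<forall>x j. j < m \<longrightarrow> apply_layers ls (\<lambda>j. inner (A j) x + a j) j = G x j"
    using assms unfolding NN_def by blast
  have "(\<lambda>x. G x j) = (\<lambda>x. apply_layers ls (\<lambda>j. inner (A j) x + a j) j)" using eq assms(2) by auto
  moreover have "continuous_on UNIV (\<lambda>x. apply_layers ls (\<lambda>j. inner (A j) x + a j) j)"
    by (rule cont_layers) (auto intro!: continuous_intros)
  ultimately show ?thesis by (simp only:)
qed

lemma NNs_cont: "NNs f \<Longrightarrow> continuous_on UNIV f"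
  unfolding NNs_def using NN_cont[of _ 1 "\<lambda>x j. f x" 0] by auto

lemma NNs_interp: "\<exists>g. NNs g \<and> g x = a \<and> g y = b \<or> x = y" for x y :: "real^'p::finite"
proof (cases "x = y")
  case True then show ?thesis by simp
next
  case False
  define c where "c = (b - a) / (norm (y - x))^2"
  define v where "v = c *\<^sub>R (y - x)"
  have n: "norm (y - x) \<noteq> 0" using False by simp
  have "inner v y - inner v x = inner v (y - x)" by (simp add: inner_diff_right)
  also have "\<dots> = c * (norm (y - x))^2" unfolding v_def by (simp add: power2_norm_eq_inner)
  also have "\<dots> = b - a" unfolding c_def using n by simp
  finally have "inner v y - inner v x = b - a" .
  then show ?thesis
    by (intro disjI1 exI[of _ "\<lambda>z. inner v z + (a - inner v x)"]) (auto intro: NNs_affine)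
qed

lemma NNs_interp2: "\<exists>g. NNs g \<and> g x = f x \<and> g y = f y" for x y :: "real^'p::finite"
proof (cases "x = y")
  case True then show ?thesis
    using NNs_affine[of 0 "f x"] by (intro exI[of _ "\<lambda>z. inner 0 z + f x"]) auto
next
  case False then show ?thesis using NNs_interp[of x "f x" y "f y"] by auto
qed

lemma NN_approx:
  fixes f :: "real^'p::finite \<Rightarrow> real"
  assumes K: "compact K" and f: "continuous_on K f" and e: "\<epsilon> > 0"
  shows "\<exists>g. NNs g \<and> (\<forall>x\<in>K. \<bar>g x - f x\<bar> < \<epsilon>)"
proof (cases "K = {}")
  case True then show ?thesis using NNs_affine by blast
next
  case Kne: False
  have step2: "\<exists>h. NNs h \<and> (\<forall>z\<in>K. h z < f z + \<epsilon>) \<and> f x - \<epsilon> < h x" if x: "x \<in> K" for x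
  proof -
    obtain gg where gg: "\<forall>y. NNs (gg y) \<and> gg y x = f x \<and> gg y y = f y"
      using choice[of "\<lambda>y g. NNs g \<and> g x = f x \<and> g y = f y"] NNs_interp2[of x f] by blast
    have "\<exists>r>0. \<forall>z\<in>K. dist z y < r \<longrightarrow> gg y z < f z + \<epsilon>" if y: "y \<in> K" for y
    proof -
      have "continuous_on K (\<lambda>z. gg y z - f z)"
        using gg NNs_cont continuous_on_subset f by (intro continuous_on_diff) blast+
      then obtain d where d: "d > 0" "\<forall>z\<in>K. dist z y < d \<longrightarrow> dist (gg y z - f z) (gg y y - f y) < \<epsilon>"
        using y e unfolding continuous_on_iff by blast
      show ?thesis using d gg by (intro exI[of _ d]) (auto simp: dist_real_def)
    qed
    then obtain r where r: "\<forall>y\<in>K. r y > 0 \<and> (\<forall>z\<in>K. dist z y < r y \<longrightarrow> gg y z < f z + \<epsilon>)"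
      by metis
    have "K \<subseteq> (\<Union>y\<in>K. ball y (r y))" using r by auto
    then obtain T where T: "T \<subseteq> K" "finite T" "K \<subseteq> (\<Union>y\<in>T. ball y (r y))"
      using compactE_image[OF K, of K "\<lambda>y. ball y (r y)"] by blast
    have Tne: "T \<noteq> {}" using T Kne by auto
    show ?thesis
    proof (intro exI conjI ballI)
      show "NNs (\<lambda>z. Min ((\<lambda>y. gg y z) ` T))" using NNs_Min[OF T(2) Tne] gg by blast
      fix z assume z: "z \<in> K"
      then obtain y where y: "y \<in> T" "dist y z < r y" using T(3) by auto
      then have "gg y z < f z + \<epsilon>" using r T(1) z by (auto simp: dist_commute)
      moreover have "Min ((\<lambda>y. gg y z) ` T) \<le> gg y z" using T(2) y by auto
      ultimately show "Min ((\<lambda>y. gg y z) ` T) < f z + \<epsilon>" by linarith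
    next
      show "f x - \<epsilon> < Min ((\<lambda>y. gg y x) ` T)" using T(2) Tne gg e by (auto simp: Min_gr_iff)
    qed
  qed
  then obtain hh where hh: "\<forall>x\<in>K. NNs (hh x) \<and> (\<forall>z\<in>K. hh x z < f z + \<epsilon>) \<and> f x - \<epsilon> < hh x x"
    by metis
  have "\<exists>s>0. \<forall>z\<in>K. dist z x < s \<longrightarrow> f z - \<epsilon> < hh x z" if x: "x \<in> K" for x
  proof -
    have "continuous_on K (\<lambda>z. hh x z - f z)"
      using hh x NNs_cont continuous_on_subset f by (intro continuous_on_diff) blast+
    moreover have "hh x x - f x + \<epsilon> > 0" using hh x by auto
    ultimately obtain d where d: "d > 0" "\<forall>z\<in>K. dist z x < d \<longrightarrow> dist (hh x z - f z) (hh x x - f x) < hh x x - f x + \<epsilon>"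
      using x unfolding continuous_on_iff by blast
    show ?thesis using d by (intro exI[of _ d]) (auto simp: dist_real_def)
  qed
  then obtain s where s: "\<forall>x\<in>K. s x > 0 \<and> (\<forall>z\<in>K. dist z x < s x \<longrightarrow> f z - \<epsilon> < hh x z)"
    by metis
  have "K \<subseteq> (\<Union>x\<in>K. ball x (s x))" using s by auto
  then obtain T where T: "T \<subseteq> K" "finite T" "K \<subseteq> (\<Union>x\<in>T. ball x (s x))"
    using compactE_image[OF K, of K "\<lambda>x. ball x (s x)"] by blast
  have Tne: "T \<noteq> {}" using T Kne by auto
  show ?thesis
  proof (intro exI conjI ballI)
    show "NNs (\<lambda>z. Max ((\<lambda>x. hh x z) ` T))" using NNs_Max[OF T(2) Tne] hh T(1) by blast
    fix z assume z: "z \<in> K"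
    then obtain x where x: "x \<in> T" "dist x z < s x" using T(3) by auto
    then have "f z - \<epsilon> < hh x z" using s T(1) z by (auto simp: dist_commute)
    moreover have "hh x z \<le> Max ((\<lambda>x. hh x z) ` T)" using T(2) x by auto
    moreover have "Max ((\<lambda>x. hh x z) ` T) < f z + \<epsilon>" using T hh Tne z by (auto simp: Max_less_iff)
    ultimately show "\<bar>Max ((\<lambda>x. hh x z) ` T) - f z\<bar> < \<epsilon>" by linarith
  qed
qed

lemma h1: "(X::real) \<ge> 0 \<Longrightarrow> Q \<ge> 1 \<Longrightarrow> X / Q \<le> X"
  by (metis divide_nonneg_nonpos dual_order.trans mult_imp_div_pos_le
    mult_le_cancel_left1 nle_le order.strict_iff_not)
lemma h2: "(ui::real) \<le> 1 \<Longrightarrow> ui \<ge> 0 \<Longrightarrow> n \<ge> (1::nat) \<Longrightarrow> \<bar>1 - n * ui\<bar> \<le> n"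
  by (smt (verit) mult_right_le_one_le one_of_nat_le_iff zero_le_mult_iff)
lemma h3: "(E::real) > 1 \<Longrightarrow> 1 - 1/E \<le> E - 1"
proof -
  assume E: "E > 1"
  have "0 \<le> (E - 1) * (E - 1)" by simp
  then have "E * (2 - E) \<le> 1" by (simp add: algebra_simps)
  then show ?thesis using E by (simp add: field_simps)
qed

lemma softmax_est:
  fixes z u :: "nat \<Rightarrow> real"
  assumes n: "n \<ge> 1" and u0: "\<forall>j<n. 0 \<le> u j" and u1: "(\<Sum>j<n. u j) = 1"
    and c: "c > 0" and t: "t > 0" and zt: "\<forall>j<n. \<bar>z j - ln (u j + c)\<bar> < t" and i: "i < n"
  shows "\<bar>softmax n z i - u i\<bar> \<le> ((exp t)^2 - 1) + n * c"
proof -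
  define E where "E = exp t"
  define q where "q j = u j + c" for j
  define S where "S = (\<Sum>j<n. exp (z j))"
  define Q where "Q = (\<Sum>j<n. q j)"
  have E1: "E > 1" unfolding E_def using t by simp
  have qpos: "\<forall>j<n. q j > 0" unfolding q_def using u0 c by (auto intro: add_nonneg_pos)
  have ez1: "exp (z j) < E * q j" if j: "j < n" for j
  proof -
    have "z j < ln (q j) + t" using zt j unfolding q_def by auto
    then have "exp (z j) < exp (ln (q j) + t)" by simp
    also have "\<dots> = E * q j" unfolding E_def using qpos j by (simp add: exp_add)
    finally show ?thesis .
  qed
  have ez2: "q j < E * exp (z j)" if j: "j < n" for j
  proof -
    have "ln (q j) < z j + t" using zt j unfolding q_def by auto
    then have "exp (ln (q j)) < exp (z j + t)" by simp
    then show ?thesis unfolding E_def using qpos j by (simp add: exp_add mult.commute)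
  qed
  have ne: "{..<n} \<noteq> {}" using n lessThan_empty_iff[of n] by simp
  have SQ1: "S < E * Q" unfolding S_def Q_def sum_distrib_left
    by (rule sum_strict_mono) (use ne ez1 in auto)
  have SQ2: "Q < E * S" unfolding S_def Q_def sum_distrib_left
    by (rule sum_strict_mono) (use ne ez2 in auto)
  have Qv: "Q = 1 + n * c" unfolding Q_def q_def using u1 by (simp add: sum.distrib)
  have Q1: "Q \<ge> 1" using Qv c by simp
  have Spos: "S > 0" unfolding S_def using ne by (intro sum_pos) auto
  have sm: "softmax n z i = exp (z i) / S" unfolding softmax_def S_def using i by simp
  define a where "a = exp (z i)"
  define b where "b = q i"
  have a0: "a > 0" unfolding a_def by simp
  have b0: "b > 0" unfolding b_def using qpos i by simp
  have ab1: "a < E * b" and ab2: "b < E * a" unfolding a_def b_def using ez1 ez2 i by auto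
  have up: "a * Q < E^2 * b * S"
  proof -
    have "a * Q < (E * b) * (E * S)" using ab1 SQ2 a0 Q1 by (intro mult_strict_mono) auto
    then show ?thesis by (simp add: power2_eq_square algebra_simps)
  qed
  have lo: "b * S < E^2 * a * Q"
  proof -
    have "b * S < (E * a) * (E * Q)" using ab2 SQ1 b0 Spos by (intro mult_strict_mono) auto
    then show ?thesis by (simp add: power2_eq_square algebra_simps)
  qed
  have ui: "u i \<le> 1" using u0 u1 i member_le_sum[of i "{..<n}" u] by auto
  have "c \<le> n * c" using n c by simp
  then have "b \<le> Q" unfolding b_def q_def Qv using ui by linarith
  then have r1: "b / Q \<le> 1" using Q1 by simp
  have E2: "E^2 > 1" using E1 by (simp add: one_less_power)
  have d1: "a / S - b / Q \<le> (E^2 - 1) * (b / Q)"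
  proof -
    have "a / S < E^2 * b / Q" using up Spos Q1 by (simp add: field_simps)
    then show ?thesis by (simp add: algebra_simps)
  qed
  have d2: "b / Q - a / S \<le> (E^2 - 1) * (b / Q)"
  proof -
    have QE: "Q * E^2 > 0" using Q1 E2 by (intro mult_pos_pos) auto
    have "b / (E^2 * Q) < a / S" using lo Spos QE by (simp add: field_simps)
    moreover have "b / Q - b / (E^2 * Q) \<le> (E^2 - 1) * (b / Q)"
    proof -
      have "1 - 1 / E^2 \<le> E^2 - 1" using E2 by (rule h3)
      then have "(1 - 1 / E^2) * (b / Q) \<le> (E^2 - 1) * (b / Q)"
        using b0 Q1 by (intro mult_right_mono) auto
      moreover have "b / Q - b / (E^2 * Q) = (1 - 1 / E^2) * (b / Q)"
        using Q1 E2 by (simp add: field_simps)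
      ultimately show ?thesis by simp
    qed
    ultimately show ?thesis by linarith
  qed
  have d3: "(E^2 - 1) * (b / Q) \<le> E^2 - 1" using mult_left_mono[OF r1, of "E^2 - 1"] E2 by simp
  have d4: "\<bar>b / Q - u i\<bar> \<le> n * c"
  proof -
    have "b / Q - u i = c * (1 - n * u i) / Q" unfolding b_def q_def Qv using Q1 Qv
      by (simp add: field_simps)
    moreover have "\<bar>c * (1 - n * u i)\<bar> \<le> n * c"
    proof -
      have "\<bar>1 - n * u i\<bar> \<le> n" using ui u0 i n by (intro h2) auto
      then show ?thesis using c by (simp add: abs_mult mult.commute mult_left_mono)
    qed
    moreover have "\<bar>c * (1 - n * u i)\<bar> / Q \<le> \<bar>c * (1 - n * u i)\<bar>" using Q1
      by (intro h1) auto
    ultimately show ?thesis by (simp add: abs_div) (use Q1 in linarith)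
  qed
  have "\<bar>a / S - u i\<bar> \<le> (E^2 - 1) + n * c" using d1 d2 d3 d4 by linarith
  then show ?thesis unfolding sm a_def E_def .
qed

lemma fm_is:
  assumes "\<forall>v\<in>prob_simplex n. \<exists>!y. is_frechet_mean \<Omega> n Y v y" "v \<in> prob_simplex n"
  shows "is_frechet_mean \<Omega> n Y v (frechet_mean \<Omega> n Y v)"
proof -
  have "\<exists>!y. is_frechet_mean \<Omega> n Y v y" using assms by blast
  then show ?thesis unfolding frechet_mean_def by (rule theI')
qed

lemma fm_limit:
  fixes y :: "nat \<Rightarrow> 'a::metric_space"
  assumes cl: "closed \<Omega>" and fm: "\<forall>k. is_frechet_mean \<Omega> n Y (v k) (y k)"
    and vu: "\<forall>i<n. (\<lambda>k. v k i) \<longlonglongrightarrow> u i" and ya: "y \<longlonglongrightarrow> a"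
  shows "is_frechet_mean \<Omega> n Y u a"
  unfolding is_frechet_mean_def
proof (intro conjI ballI)
  show "a \<in> \<Omega>" using closed_sequentially[OF cl _ ya] fm unfolding is_frechet_mean_def by blast
  fix z assume z: "z \<in> \<Omega>"
  have t1: "(\<lambda>k. frechet_obj n Y (v k) (y k)) \<longlonglongrightarrow> frechet_obj n Y u a"
    unfolding frechet_obj_def using vu ya by (auto intro!: tendsto_intros)
  have t2: "(\<lambda>k. frechet_obj n Y (v k) z) \<longlonglongrightarrow> frechet_obj n Y u z"
    unfolding frechet_obj_def using vu by (auto intro!: tendsto_intros)
  show "frechet_obj n Y u a \<le> frechet_obj n Y u z"
    by (rule LIMSEQ_le[OF t1 t2]) (use fm z in \<open>auto simp: is_frechet_mean_def\<close>)
qed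

lemma fm_unif:
  fixes w :: "'x::metric_space \<Rightarrow> nat \<Rightarrow> real" and \<Omega> :: "'a::metric_space set"
  assumes \<Omega>: "compact \<Omega>" and K: "compact K"
    and uniq: "\<forall>v\<in>prob_simplex n. \<exists>!y. is_frechet_mean \<Omega> n Y v y"
    and wK: "\<forall>x\<in>K. w x \<in> prob_simplex n" and wc: "\<forall>i<n. continuous_on K (\<lambda>x. w x i)"
    and e: "\<epsilon> > 0"
  shows "\<exists>\<delta>>0. \<forall>x\<in>K. \<forall>v\<in>prob_simplex n. (\<forall>i<n. \<bar>v i - w x i\<bar> < \<delta>) \<longrightarrow>
           dist (frechet_mean \<Omega> n Y v) (frechet_mean \<Omega> n Y (w x)) < \<epsilon>"
proof (rule ccontr)
  define M where "M = frechet_mean \<Omega> n Y"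
  assume "\<not> ?thesis"
  then have "\<forall>k. \<exists>x v. x \<in> K \<and> v \<in> prob_simplex n \<and> (\<forall>i<n. \<bar>v i - w x i\<bar> < inverse (real (Suc k))) \<and>
      \<epsilon> \<le> dist (M v) (M (w x))"
    unfolding M_def by (metis inverse_positive_iff_positive of_nat_0_less_iff zero_less_Suc not_less)
  then obtain xs vs where seq: "\<forall>k. xs k \<in> K \<and> vs k \<in> prob_simplex n \<and>
      (\<forall>i<n. \<bar>vs k i - w (xs k) i\<bar> < inverse (real (Suc k))) \<and> \<epsilon> \<le> dist (M (vs k)) (M (w (xs k)))"
    by metis
  have fmv: "is_frechet_mean \<Omega> n Y (vs k) (M (vs k))" for k
    unfolding M_def using fm_is[OF uniq] seq by blast
  have fmw: "is_frechet_mean \<Omega> n Y (w (xs k)) (M (w (xs k)))" for k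
    unfolding M_def using fm_is[OF uniq] seq wK by blast
  define s where "s k = (xs k, M (vs k), M (w (xs k)))" for k
  have "\<forall>k. s k \<in> K \<times> \<Omega> \<times> \<Omega>" unfolding s_def using seq fmv fmw by (auto simp: is_frechet_mean_def)
  moreover have "seq_compact (K \<times> \<Omega> \<times> \<Omega>)"
    by (intro compact_imp_seq_compact compact_Times K \<Omega>)
  ultimately obtain l r where l: "l \<in> K \<times> \<Omega> \<times> \<Omega>" and r: "strict_mono r" and lim: "(s \<circ> r) \<longlonglongrightarrow> l"
    using seq_compactE by metis
  obtain x0 a b where lv: "l = (x0, a, b)" by (cases l) auto
  have x0: "x0 \<in> K" using l lv by auto
  have limx: "(\<lambda>k. xs (r k)) \<longlonglongrightarrow> x0" using tendsto_fst[OF lim] unfolding lv s_def by (simp add: o_def)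
  have lima: "(\<lambda>k. M (vs (r k))) \<longlonglongrightarrow> a" using tendsto_fst[OF tendsto_snd[OF lim]] unfolding lv s_def by (simp add: o_def)
  have limb: "(\<lambda>k. M (w (xs (r k)))) \<longlonglongrightarrow> b" using tendsto_snd[OF tendsto_snd[OF lim]] unfolding lv s_def by (simp add: o_def)
  have wlim: "(\<lambda>k. w (xs (r k)) i) \<longlonglongrightarrow> w x0 i" if i: "i < n" for i
    using wc i x0 seq limx unfolding continuous_on_sequentially by (auto simp: o_def)
  have vlim: "(\<lambda>k. vs (r k) i) \<longlonglongrightarrow> w x0 i" if i: "i < n" for i
  proof -
    have "(\<lambda>k. vs (r k) i - w (xs (r k)) i) \<longlonglongrightarrow> 0"
    proof (rule Lim_null_comparison)
      show "\<forall>\<^sub>F k in sequentially. norm (vs (r k) i - w (xs (r k)) i) \<le> inverse (real (Suc k))"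
      proof (rule always_eventually, rule allI)
        fix k
        have "norm (vs (r k) i - w (xs (r k)) i) < inverse (real (Suc (r k)))" using seq i by auto
        also have "\<dots> \<le> inverse (real (Suc k))" using seq_suble[OF r, of k]
          by (intro le_imp_inverse_le) auto
        finally show "norm (vs (r k) i - w (xs (r k)) i) \<le> inverse (real (Suc k))" by simp
      qed
      show "(\<lambda>k. inverse (real (Suc k))) \<longlonglongrightarrow> 0" by (rule LIMSEQ_inverse_real_of_nat)
    qed
    from tendsto_add[OF this wlim[OF i]] show ?thesis by simp
  qed
  have cl: "closed \<Omega>" using \<Omega> compact_imp_closed by blast
  have "is_frechet_mean \<Omega> n Y (w x0) a"
    by (rule fm_limit[OF cl, where v="\<lambda>k. vs (r k)" and y="\<lambda>k. M (vs (r k))"]) (use fmv vlim lima in auto)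
  moreover have "is_frechet_mean \<Omega> n Y (w x0) b"
    by (rule fm_limit[OF cl, where v="\<lambda>k. w (xs (r k))" and y="\<lambda>k. M (w (xs (r k)))"]) (use fmw wlim limb in auto)
  ultimately have ab: "a = b" using uniq wK x0 by blast
  have "(\<lambda>k. dist (M (vs (r k))) (M (w (xs (r k))))) \<longlonglongrightarrow> dist a b"
    by (intro tendsto_dist lima limb)
  then have "\<epsilon> \<le> dist a b" by (rule LIMSEQ_le_const) (use seq in auto)
  then show False using ab e by simp
qed

lemma fm_cont:
  fixes g :: "'x::metric_space \<Rightarrow> nat \<Rightarrow> real" and \<Omega> :: "'a::metric_space set"
  assumes \<Omega>: "compact \<Omega>"
    and uniq: "\<forall>v\<in>prob_simplex n. \<exists>!y. is_frechet_mean \<Omega> n Y v y"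
    and gs: "\<forall>x. g x \<in> prob_simplex n" and gc: "\<forall>i<n. continuous_on UNIV (\<lambda>x. g x i)"
  shows "continuous_on UNIV (\<lambda>x. frechet_mean \<Omega> n Y (g x))"
  unfolding continuous_on_eq_continuous_at[OF open_UNIV]
proof
  fix x0 :: 'x
  show "isCont (\<lambda>x. frechet_mean \<Omega> n Y (g x)) x0"
    unfolding isCont_def
  proof (rule tendstoI)
    fix e :: real assume e: "e > 0"
    obtain d where d: "d > 0" and dd: "\<forall>x\<in>{x0}. \<forall>v\<in>prob_simplex n. (\<forall>i<n. \<bar>v i - g x i\<bar> < d) \<longrightarrow>
           dist (frechet_mean \<Omega> n Y v) (frechet_mean \<Omega> n Y (g x)) < e"
      using fm_unif[OF \<Omega> compact_sing uniq, of x0 g e] gs gc e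
      by (meson continuous_on_subset subset_UNIV)
    have "\<forall>i\<in>{..<n}. \<forall>\<^sub>F x in at x0. dist (g x i) (g x0 i) < d"
    proof
      fix i assume "i \<in> {..<n}"
      then have "isCont (\<lambda>x. g x i) x0" using gc continuous_on_eq_continuous_at[OF open_UNIV] by auto
      then show "\<forall>\<^sub>F x in at x0. dist (g x i) (g x0 i) < d" unfolding isCont_def using d by (rule tendstoD)
    qed
    then have "\<forall>\<^sub>F x in at x0. \<forall>i\<in>{..<n}. dist (g x i) (g x0 i) < d"
      by (rule eventually_ball_finite[rotated]) simp
    then show "\<forall>\<^sub>F x in at x0. dist (frechet_mean \<Omega> n Y (g x)) (frechet_mean \<Omega> n Y (g x0)) < e"
      by eventually_elim (use dd gs in \<open>auto simp: dist_real_def\<close>)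
  qed
qed

lemma nn_simplex: assumes n: "n \<ge> 1" shows "nn_eval n \<theta> x \<in> prob_simplex n"
proof -
  obtain A a ls where th: "\<theta> = (A, a, ls)" by (cases \<theta>) auto
  define z where "z = apply_layers ls (\<lambda>j. inner (A j) x + a j)"
  have e: "nn_eval n \<theta> x = softmax n z" unfolding nn_eval_def th z_def by simp
  have ne: "{..<n} \<noteq> {}" using n lessThan_empty_iff[of n] by simp
  have S: "(\<Sum>j<n. exp (z j)) > 0" using ne by (intro sum_pos) auto
  have "(\<Sum>i<n. softmax n z i) = (\<Sum>i<n. exp (z i) / (\<Sum>j<n. exp (z j)))"
    unfolding softmax_def by simp
  also have "\<dots> = 1" using S by (simp add: sum_divide_distrib[symmetric])
  finally show ?thesis unfolding e prob_simplex_def softmax_def using S by (auto intro!: divide_nonneg_pos)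
qed

lemma nn_cont: assumes n: "n \<ge> 1" shows "continuous_on UNIV (\<lambda>x. nn_eval n \<theta> x i)"
proof -
  obtain A a ls where th: "\<theta> = (A, a, ls)" by (cases \<theta>) auto
  define z where "z x = apply_layers ls (\<lambda>j. inner (A j) x + a j)" for x
  have e: "(\<lambda>x. nn_eval n \<theta> x i) = (\<lambda>x. if i < n then exp (z x i) / (\<Sum>j<n. exp (z x j)) else 0)"
    unfolding nn_eval_def th z_def softmax_def by simp
  have zc: "continuous_on UNIV (\<lambda>x. z x j)" for j
    unfolding z_def by (rule cont_layers) (auto intro!: continuous_intros)
  have ne: "{..<n} \<noteq> {}" using n lessThan_empty_iff[of n] by simp
  have S: "(\<Sum>j<n. exp (z x j)) \<noteq> 0" for x using ne by (intro sum_pos[THEN less_imp_neq, symmetric]) auto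
  show ?thesis unfolding e
    by (cases "i < n") (auto intro!: continuous_intros zc S)
qed

lemma net_approx:
  fixes w :: "real^'p::finite \<Rightarrow> nat \<Rightarrow> real"
  assumes n: "n \<ge> 1" and K: "compact K" and wK: "\<forall>x\<in>K. w x \<in> prob_simplex n"
    and wc: "\<forall>i<n. continuous_on K (\<lambda>x. w x i)" and eta: "\<eta> > 0"
  shows "\<exists>\<theta> :: 'p network. \<forall>x\<in>K. \<forall>i<n. \<bar>nn_eval n \<theta> x i - w x i\<bar> < \<eta>"
proof -
  define c where "c = \<eta> / (4 * n)"
  define t where "t = ln (1 + \<eta> / 2) / 4"
  have c0: "c > 0" unfolding c_def using n eta by simp
  have nc: "n * c = \<eta> / 4" unfolding c_def using n by simp
  have L0: "ln (1 + \<eta> / 2) > 0" using eta by simp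
  have t0: "t > 0" unfolding t_def using L0 by simp
  have "(exp t)^2 = exp (2 * t)" by (simp add: exp_double[symmetric])
  also have "\<dots> < exp (ln (1 + \<eta> / 2))" unfolding t_def using L0 by simp
  also have "\<dots> = 1 + \<eta> / 2" using eta by simp
  finally have Et: "(exp t)^2 - 1 < \<eta> / 2" by simp
  have wpos: "0 \<le> w x i" if "x \<in> K" "i < n" for x i using wK that unfolding prob_simplex_def by auto
  have nz: "w x i + c \<noteq> 0" if "x \<in> K" "i < n" for x i using wpos[OF that] c0 by linarith
  have fc: "continuous_on K (\<lambda>x. ln (w x i + c))" if i: "i < n" for i
    using wc i nz by (intro continuous_intros) auto
  have "\<forall>i. \<exists>g. i < n \<longrightarrow> NNs g \<and> (\<forall>x\<in>K. \<bar>g x - ln (w x i + c)\<bar> < t)"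
    using NN_approx[OF K fc t0] by blast
  then obtain gs where gs: "\<forall>i<n. NNs (gs i) \<and> (\<forall>x\<in>K. \<bar>gs i x - ln (w x i + c)\<bar> < t)"
    by metis
  obtain k where "NN k n (\<lambda>x i. gs i x)" using NN_vec[of n gs] gs by auto
  then obtain A a ls where eq: "\<forall>x j. j < n \<longrightarrow> apply_layers ls (\<lambda>j. inner (A j) x + a j) j = gs j x"
    unfolding NN_def by blast
  show ?thesis
  proof (intro exI[of _ "(A, a, ls)"] ballI allI impI)
    fix x i assume x: "x \<in> K" and i: "i < n"
    define z where "z = apply_layers ls (\<lambda>j. inner (A j) x + a j)"
    have e: "nn_eval n (A, a, ls) x = softmax n z" unfolding nn_eval_def z_def by simp
    have "\<bar>softmax n z i - w x i\<bar> \<le> ((exp t)^2 - 1) + n * c"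
      by (rule softmax_est[OF n _ _ c0 t0 _ i]) (use wK x gs eq in \<open>auto simp: prob_simplex_def z_def\<close>)
    then show "\<bar>nn_eval n (A, a, ls) x i - w x i\<bar> < \<eta>" unfolding e using Et nc eta by linarith
  qed
qed

theorem theorem4p2:
  fixes \<Omega> :: "'a::metric_space set"
    and n :: nat
    and Y :: "nat \<Rightarrow> 'a"
    and w :: "real ^ 'p \<Rightarrow> (nat \<Rightarrow> real)"
  assumes "compact \<Omega>"
    and "n \<ge> 1"
    and "\<forall>i<n. Y i \<in> \<Omega>"
    and "\<forall>v\<in>prob_simplex n. \<exists>!y. is_frechet_mean \<Omega> n Y v y"
    and "\<forall>x. w x \<in> prob_simplex n"
    and "\<forall>i<n. continuous_on UNIV (\<lambda>x. w x i)"
  shows "(\<forall>\<epsilon>>0. \<exists>\<theta> :: 'p network.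
            (SUP x\<in>cball 0 1. dist (frechet_mean \<Omega> n Y (nn_eval n \<theta> x))
                                   (frechet_mean \<Omega> n Y (w x))) < \<epsilon>)
       \<and> (\<forall>(M :: 'b measure) (X :: 'b \<Rightarrow> real ^ 'p).
            prob_space M \<longrightarrow> X \<in> borel_measurable M \<longrightarrow> stoch_bounded M X \<longrightarrow>
            (\<forall>\<epsilon>>0. \<forall>\<delta>>0. \<exists>\<theta> :: 'p network.
               measure M {\<omega>\<in>space M.
                  dist (frechet_mean \<Omega> n Y (nn_eval n \<theta> (X \<omega>)))
                       (frechet_mean \<Omega> n Y (w (X \<omega>))) < \<epsilon>} > 1 - \<delta>))"
proof -
  note \<Omega> = assms(1) and n = assms(2) and uniq = assms(4) and ws = assms(5) and wc = assms(6)
  have main: "\<exists>\<theta> :: 'p network. \<forall>x\<in>cball 0 R. dist (frechet_mean \<Omega> n Y (nn_eval n \<theta> x))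
                                   (frechet_mean \<Omega> n Y (w x)) < \<epsilon>" if e: "\<epsilon> > 0" for R \<epsilon>
  proof -
    have wcK: "\<forall>i<n. continuous_on (cball 0 R) (\<lambda>x. w x i)"
      using wc by (meson continuous_on_subset subset_UNIV)
    obtain \<delta> where d: "\<delta> > 0" and dd: "\<forall>x\<in>cball 0 R. \<forall>v\<in>prob_simplex n. (\<forall>i<n. \<bar>v i - w x i\<bar> < \<delta>) \<longrightarrow>
           dist (frechet_mean \<Omega> n Y v) (frechet_mean \<Omega> n Y (w x)) < \<epsilon>"
      using fm_unif[OF \<Omega> compact_cball uniq _ wcK e] ws by blast
    obtain \<theta> :: "'p network" where th: "\<forall>x\<in>cball 0 R. \<forall>i<n. \<bar>nn_eval n \<theta> x i - w x i\<bar> < \<delta>"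
      using net_approx[OF n compact_cball _ wcK d] ws by blast
    show ?thesis using dd th nn_simplex[OF n] by blast
  qed
  have P1: "\<forall>\<epsilon>>0. \<exists>\<theta> :: 'p network.
            (SUP x\<in>cball 0 1. dist (frechet_mean \<Omega> n Y (nn_eval n \<theta> x))
                                   (frechet_mean \<Omega> n Y (w x))) < \<epsilon>"
  proof (intro allI impI)
    fix \<epsilon> :: real assume e: "\<epsilon> > 0"
    obtain \<theta> :: "'p network" where th: "\<forall>x\<in>cball 0 1. dist (frechet_mean \<Omega> n Y (nn_eval n \<theta> x))
                                   (frechet_mean \<Omega> n Y (w x)) < \<epsilon> / 2"
      using main[of "\<epsilon>/2" 1] e by auto
    have "(SUP x\<in>cball 0 1. dist (frechet_mean \<Omega> n Y (nn_eval n \<theta> x))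
                                   (frechet_mean \<Omega> n Y (w x))) \<le> \<epsilon> / 2"
      by (rule cSUP_least) (use th in \<open>auto intro: less_imp_le\<close>)
    then show "\<exists>\<theta> :: 'p network.
            (SUP x\<in>cball 0 1. dist (frechet_mean \<Omega> n Y (nn_eval n \<theta> x))
                                   (frechet_mean \<Omega> n Y (w x))) < \<epsilon>"
      using e by (intro exI[of _ \<theta>]) linarith
  qed
  have P2: "\<forall>(M :: 'b measure) (X :: 'b \<Rightarrow> real ^ 'p).
            prob_space M \<longrightarrow> X \<in> borel_measurable M \<longrightarrow> stoch_bounded M X \<longrightarrow>
            (\<forall>\<epsilon>>0. \<forall>\<delta>>0. \<exists>\<theta> :: 'p network.
               measure M {\<omega>\<in>space M.
                  dist (frechet_mean \<Omega> n Y (nn_eval n \<theta> (X \<omega>)))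
                       (frechet_mean \<Omega> n Y (w (X \<omega>))) < \<epsilon>} > 1 - \<delta>)"
  proof (intro allI impI)
    fix M :: "'b measure" and X :: "'b \<Rightarrow> real ^ 'p" and \<epsilon> \<delta> :: real
    assume PM: "prob_space M" and Xm: "X \<in> borel_measurable M" and sb: "stoch_bounded M X"
      and e: "\<epsilon> > 0" and d: "\<delta> > 0"
    interpret prob_space M by (rule PM)
    obtain C where C: "measure M {\<omega>\<in>space M. norm (X \<omega>) \<le> C} > 1 - \<delta>"
      using sb d unfolding stoch_bounded_def by blast
    obtain \<theta> :: "'p network" where th: "\<forall>x\<in>cball 0 C. dist (frechet_mean \<Omega> n Y (nn_eval n \<theta> x))
                                   (frechet_mean \<Omega> n Y (w x)) < \<epsilon>"
      using main[OF e] by blast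
    define h where "h x = dist (frechet_mean \<Omega> n Y (nn_eval n \<theta> x)) (frechet_mean \<Omega> n Y (w x))" for x
    have hc: "continuous_on UNIV h" unfolding h_def
      by (intro continuous_on_dist fm_cont[OF \<Omega> uniq] nn_simplex[OF n] ws wc allI impI nn_cont[OF n])
    have hm: "(\<lambda>\<omega>. h (X \<omega>)) \<in> borel_measurable M"
      using measurable_compose[OF Xm borel_measurable_continuous_onI[OF hc]] by (simp add: o_def)
    have B: "{\<omega>\<in>space M. h (X \<omega>) < \<epsilon>} \<in> sets M"
      using hm by measurable
    have sub: "{\<omega>\<in>space M. norm (X \<omega>) \<le> C} \<subseteq> {\<omega>\<in>space M. h (X \<omega>) < \<epsilon>}"
      using th unfolding h_def by (auto simp: dist_norm)
    have "measure M {\<omega>\<in>space M. norm (X \<omega>) \<le> C} \<le> measure M {\<omega>\<in>space M. h (X \<omega>) < \<epsilon>}"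
      by (rule finite_measure_mono[OF sub B])
    then show "\<exists>\<theta> :: 'p network.
               measure M {\<omega>\<in>space M.
                  dist (frechet_mean \<Omega> n Y (nn_eval n \<theta> (X \<omega>)))
                       (frechet_mean \<Omega> n Y (w (X \<omega>))) < \<epsilon>} > 1 - \<delta>"
      using C unfolding h_def by (intro exI[of _ \<theta>]) linarith
  qed
  show ?thesis using P1 P2 by blast
qed

end
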